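(* Let $\mathcal T$ be a ternary algebra over $\mathbb C$, i.e. a complex vector space equipped with a trilinear ternary multiplication $(a,b,c)\mapsto a\cdot b\cdot c$ which is associative of the first kind or associative of the second kind (see context). Let $\omega$ be a primitive cube root of unity and $\overline\omega$ its complex conjugate. For $a,b,c\in\mathcal T$ define the ternary commutator $$[a,b,c]=a\cdot b\cdot c+\omega\,b\cdot c\cdot a+\overline\omega\,c\cdot a\cdot b+c\cdot b\cdot a+\overline\omega\,b\cdot a\cdot c+\omega\,a\cdot c\cdot b$$ and its conjugate $$[a,b,c]^\ast=a\cdot b\cdot c+\overline\omega\,b\cdot c\cdot a+\omega\,c\cdot a\cdot b+c\cdot b\cdot a+\omega\,b\cdot a\cdot c+\overline\omega\,a\cdot c\cdot b.$$ Then for all $a,b,c,d,f\in\mathcal T$: $$[a,b,c]=\omega\,[b,c,a]=\overline\omega\,[c,a,b],\qquad [a,b,c]^\ast=\overline\omega\,[b,c,a]^\ast=\omega\,[c,a,b]^\ast,$$ and the ternary commutator satisfies the identity $$\sum_{(x_1,x_2,x_3,x_4,x_5)}\Big(\big[[x_1,x_2,x_3],x_4,x_5\big]+\big[[x_1,x_4,x_2],x_5,x_3\big]+\big[[x_1,x_5,x_4],x_3,x_2\big]+\big[[x_1,x_3,x_5],x_2,x_4\big]\Big)=0,$$ where the sum runs over the five cyclic permutations $(x_1,x_2,x_3,x_4,x_5)\in\{(a,b,c,d,f),(b,c,d,f,a),(c,d,f,a,b),(d,f,a,b,c),(f,a,b,c,d)\}$.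
   Context: A ternary multiplication on a complex vector space $\mathcal T$ is a trilinear map $\mathcal T\times\mathcal T\times\mathcal T\to\mathcal T$, $(a,b,c)\mapsto a\cdot b\cdot c$. It is associative of the first kind if $(a\cdot b\cdot c)\cdot d\cdot f=a\cdot(b\cdot c\cdot d)\cdot f=a\cdot b\cdot(c\cdot d\cdot f)$ for all $a,b,c,d,f\in\mathcal T$, and associative of the second kind if $(a\cdot b\cdot c)\cdot d\cdot f=a\cdot(d\cdot c\cdot b)\cdot f=a\cdot b\cdot(c\cdot d\cdot f)$ for all $a,b,c,d,f\in\mathcal T$. A ternary algebra is a complex vector space with a ternary multiplication associative of the first or of the second kind. *)

theory Defs
  imports Complex_Main
begin

definition trilinear :: "(complex \<Rightarrow> 'v::ab_group_add \<Rightarrow> 'v) \<Rightarrow> ('v \<Rightarrow> 'v \<Rightarrow> 'v \<Rightarrow> 'v) \<Rightarrow> bool" where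
  "trilinear sc m \<longleftrightarrow>
     (\<forall>b c. Vector_Spaces.linear sc sc (\<lambda>x. m x b c)) \<and>
     (\<forall>a c. Vector_Spaces.linear sc sc (\<lambda>x. m a x c)) \<and>
     (\<forall>a b. Vector_Spaces.linear sc sc (\<lambda>x. m a b x))"

definition assoc_first_kind :: "('v \<Rightarrow> 'v \<Rightarrow> 'v \<Rightarrow> 'v) \<Rightarrow> bool" where
  "assoc_first_kind m \<longleftrightarrow>
     (\<forall>a b c d f. m (m a b c) d f = m a (m b c d) f \<and> m a (m b c d) f = m a b (m c d f))"

definition assoc_second_kind :: "('v \<Rightarrow> 'v \<Rightarrow> 'v \<Rightarrow> 'v) \<Rightarrow> bool" where
  "assoc_second_kind m \<longleftrightarrow>
     (\<forall>a b c d f. m (m a b c) d f = m a (m d c b) f \<and> m a (m d c b) f = m a b (m c d f))"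

definition ternary_algebra :: "(complex \<Rightarrow> 'v::ab_group_add \<Rightarrow> 'v) \<Rightarrow> ('v \<Rightarrow> 'v \<Rightarrow> 'v \<Rightarrow> 'v) \<Rightarrow> bool" where
  "ternary_algebra sc m \<longleftrightarrow> vector_space sc \<and> trilinear sc m \<and>
     (assoc_first_kind m \<or> assoc_second_kind m)"

definition tcomm :: "(complex \<Rightarrow> 'v::ab_group_add \<Rightarrow> 'v) \<Rightarrow> ('v \<Rightarrow> 'v \<Rightarrow> 'v \<Rightarrow> 'v) \<Rightarrow> complex \<Rightarrow> 'v \<Rightarrow> 'v \<Rightarrow> 'v \<Rightarrow> 'v" where
  "tcomm sc m w a b c =
     m a b c + sc w (m b c a) + sc (cnj w) (m c a b)
     + m c b a + sc (cnj w) (m b a c) + sc w (m a c b)"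

definition tcomm_conj :: "(complex \<Rightarrow> 'v::ab_group_add \<Rightarrow> 'v) \<Rightarrow> ('v \<Rightarrow> 'v \<Rightarrow> 'v \<Rightarrow> 'v) \<Rightarrow> complex \<Rightarrow> 'v \<Rightarrow> 'v \<Rightarrow> 'v \<Rightarrow> 'v" where
  "tcomm_conj sc m w a b c =
     m a b c + sc (cnj w) (m b c a) + sc w (m c a b)
     + m c b a + sc w (m b a c) + sc (cnj w) (m a c b)"

definition tcomm_J :: "(complex \<Rightarrow> 'v::ab_group_add \<Rightarrow> 'v) \<Rightarrow> ('v \<Rightarrow> 'v \<Rightarrow> 'v \<Rightarrow> 'v) \<Rightarrow> complex \<Rightarrow> 'v \<Rightarrow> 'v \<Rightarrow> 'v \<Rightarrow> 'v \<Rightarrow> 'v \<Rightarrow> 'v" where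
  "tcomm_J sc m w x1 x2 x3 x4 x5 =
     tcomm sc m w (tcomm sc m w x1 x2 x3) x4 x5
     + tcomm sc m w (tcomm sc m w x1 x4 x2) x5 x3
     + tcomm sc m w (tcomm sc m w x1 x5 x4) x3 x2
     + tcomm sc m w (tcomm sc m w x1 x3 x5) x2 x4"

end

theory Submission
  imports Defs
begin

lemma cube_root_facts:
  fixes w :: complex
  assumes "w ^ 3 = 1" and "w \<noteq> 1"
  shows "cnj w = -1 - w" "w * w = -1 - w"
proof -
  have "(w - 1) * (w*w + w + 1) = w^3 - 1" by (simp add: algebra_simps power3_eq_cube)
  hence q: "w*w + w + 1 = 0" using assms by simp
  have "norm w ^ 3 = 1" using assms by (metis norm_one norm_power)
  hence "norm w = 1" using power_eq_imp_eq_base[of "norm w" 3 1] by simp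
  hence "w * cnj w = 1" by (simp add: complex_norm_square[symmetric])
  have "cnj w = (w*w*w) * cnj w" using assms(1) by (simp add: power3_eq_cube)
  also have "\<dots> = w * w * (w * cnj w)" by (simp add: mult_ac)
  also have "\<dots> = w * w" using \<open>w * cnj w = 1\<close> by simp
  finally show "cnj w = -1 - w" using q by (simp add: eq_diff_eq eq_neg_iff_add_eq_0 add.commute)
  show "w * w = -1 - w" using q by (simp add: eq_diff_eq eq_neg_iff_add_eq_0 add.commute)
qed

lemma cyc:
  fixes m :: "'v::ab_group_add \<Rightarrow> 'v \<Rightarrow> 'v \<Rightarrow> 'v"
  assumes WA: "\<And>x y. W (x+y) = W x + W y" and WN: "\<And>x. W (- x) = - W x"
    and WW: "\<And>x. W (W x) = - x - W x"
    and Ww: "\<And>x. sc w x = W x" and Wc: "\<And>x. sc (cnj w) x = - x - W x"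
  shows "tcomm sc m w a b c = sc w (tcomm sc m w b c a)"
    "tcomm sc m w a b c = sc (cnj w) (tcomm sc m w c a b)"
    "tcomm_conj sc m w a b c = sc (cnj w) (tcomm_conj sc m w b c a)"
    "tcomm_conj sc m w a b c = sc w (tcomm_conj sc m w c a b)"
  unfolding tcomm_def tcomm_conj_def
  by (simp only: Ww Wc WA WN WW diff_conv_add_uminus minus_add_distrib minus_minus,
      simp only: add.assoc[symmetric],
      simp only: add_uminus_conv_diff uminus_add_conv_diff diff_add_eq diff_diff_eq add_diff_eq diff_eq_eq eq_diff_eq add_0_left add_0_right,
      simp only: add_ac)+

lemma J_first:
  fixes m :: "'v::ab_group_add \<Rightarrow> 'v \<Rightarrow> 'v \<Rightarrow> 'v"
  assumes WA: "\<And>x y. W (x+y) = W x + W y" and WN: "\<And>x. W (- x) = - W x"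
    and WW: "\<And>x. W (W x) = - x - W x"
    and Ww: "\<And>x. sc w x = W x" and Wc: "\<And>x. sc (cnj w) x = - x - W x"
    and A1: "\<And>x y b c. m (x+y) b c = m x b c + m y b c"
    and A2: "\<And>x y b c. m b (x+y) c = m b x c + m b y c"
    and A3: "\<And>x y b c. m b c (x+y) = m b c x + m b c y"
    and N1: "\<And>x b c. m (- x) b c = - m x b c"
    and N2: "\<And>x b c. m b (- x) c = - m b x c"
    and N3: "\<And>x b c. m b c (- x) = - m b c x"
    and M1: "\<And>x b c. m (W x) b c = W (m x b c)"
    and M2: "\<And>x b c. m b (W x) c = W (m b x c)"
    and M3: "\<And>x b c. m b c (W x) = W (m b c x)"
    and mid: "\<And>a b c d f. m a (m b c d) f = m (m a b c) d f"
    and right: "\<And>a b c d f. m a b (m c d f) = m (m a b c) d f"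
  shows "tcomm_J sc m w a b c d f + tcomm_J sc m w b c d f a + tcomm_J sc m w c d f a b
      + tcomm_J sc m w d f a b c + tcomm_J sc m w f a b c d = 0"
  unfolding tcomm_J_def tcomm_def
  apply (simp only: Ww Wc)
  apply (simp only: A1 A2 A3 N1 N2 N3 M1 M2 M3 WA WN WW mid right diff_conv_add_uminus minus_add_distrib minus_minus)
  apply (simp only: add.assoc[symmetric])
  apply (simp only: add_uminus_conv_diff uminus_add_conv_diff diff_add_eq diff_diff_eq add_diff_eq diff_eq_eq eq_diff_eq add_0_left add_0_right)
  apply (simp only: add_ac)
  done
lemma J_second:
  fixes m :: "'v::ab_group_add \<Rightarrow> 'v \<Rightarrow> 'v \<Rightarrow> 'v"
  assumes WA: "\<And>x y. W (x+y) = W x + W y" and WN: "\<And>x. W (- x) = - W x"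
    and WW: "\<And>x. W (W x) = - x - W x"
    and Ww: "\<And>x. sc w x = W x" and Wc: "\<And>x. sc (cnj w) x = - x - W x"
    and A1: "\<And>x y b c. m (x+y) b c = m x b c + m y b c"
    and A2: "\<And>x y b c. m b (x+y) c = m b x c + m b y c"
    and A3: "\<And>x y b c. m b c (x+y) = m b c x + m b c y"
    and N1: "\<And>x b c. m (- x) b c = - m x b c"
    and N2: "\<And>x b c. m b (- x) c = - m b x c"
    and N3: "\<And>x b c. m b c (- x) = - m b c x"
    and M1: "\<And>x b c. m (W x) b c = W (m x b c)"
    and M2: "\<And>x b c. m b (W x) c = W (m b x c)"
    and M3: "\<And>x b c. m b c (W x) = W (m b c x)"
    and mid: "\<And>a b c d f. m a (m b c d) f = m (m a d c) b f"
    and right: "\<And>a b c d f. m a b (m c d f) = m (m a b c) d f"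
  shows "tcomm_J sc m w a b c d f + tcomm_J sc m w b c d f a + tcomm_J sc m w c d f a b
      + tcomm_J sc m w d f a b c + tcomm_J sc m w f a b c d = 0"
  unfolding tcomm_J_def tcomm_def
  apply (simp only: Ww Wc)
  apply (simp only: A1 A2 A3 N1 N2 N3 M1 M2 M3 WA WN WW mid right diff_conv_add_uminus minus_add_distrib minus_minus)
  apply (simp only: add.assoc[symmetric])
  apply (simp only: add_uminus_conv_diff uminus_add_conv_diff diff_add_eq diff_diff_eq add_diff_eq diff_eq_eq eq_diff_eq add_0_left add_0_right)
  apply (simp only: add_ac)
  done
theorem theorem1:
  fixes sc :: "complex \<Rightarrow> 'v::ab_group_add \<Rightarrow> 'v"
    and m :: "'v \<Rightarrow> 'v \<Rightarrow> 'v \<Rightarrow> 'v"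
    and w :: complex
  assumes "ternary_algebra sc m"
    and "w ^ 3 = 1" and "w \<noteq> 1"
  shows "\<forall>a b c d f.
      tcomm sc m w a b c = sc w (tcomm sc m w b c a)
    \<and> tcomm sc m w a b c = sc (cnj w) (tcomm sc m w c a b)
    \<and> tcomm_conj sc m w a b c = sc (cnj w) (tcomm_conj sc m w b c a)
    \<and> tcomm_conj sc m w a b c = sc w (tcomm_conj sc m w c a b)
    \<and> tcomm_J sc m w a b c d f + tcomm_J sc m w b c d f a + tcomm_J sc m w c d f a b
      + tcomm_J sc m w d f a b c + tcomm_J sc m w f a b c d = 0"
proof (intro allI)
  fix a b c d f
  have vs: "vector_space sc" and tri: "trilinear sc m"
    and as: "assoc_first_kind m \<or> assoc_second_kind m"
    using assms(1) unfolding ternary_algebra_def by auto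
  have md: "module sc" using vs by (simp add: vector_space_def module_def)
  have cw: "cnj w = -1 - w" and ww: "w * w = -1 - w" using cube_root_facts assms(2,3) by auto
  define W where "W = sc w"
  have Ww: "\<And>x. sc w x = W x" by (simp add: W_def)
  have WA: "\<And>x y. W (x+y) = W x + W y" unfolding W_def using module.scale_right_distrib[OF md] .
  have WN: "\<And>x. W (- x) = - W x" unfolding W_def using module.scale_minus_right[OF md] .
  have Wc: "\<And>x. sc (cnj w) x = - x - W x" unfolding W_def cw
    by (simp add: module.scale_left_diff_distrib[OF md] module.scale_minus_left[OF md] module.scale_one[OF md])
  have WW: "\<And>x. W (W x) = - x - W x" unfolding W_def
    by (simp add: module.scale_scale[OF md] ww module.scale_left_diff_distrib[OF md] module.scale_minus_left[OF md] module.scale_one[OF md])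
  have h1: "\<And>b c. module_hom sc sc (\<lambda>x. m x b c)"
   and h2: "\<And>a c. module_hom sc sc (\<lambda>x. m a x c)"
   and h3: "\<And>a b. module_hom sc sc (\<lambda>x. m a b x)"
    using tri unfolding trilinear_def
    by (simp_all add: Vector_Spaces.linear_def module_hom_def vector_space_def module_def)
  have A1: "\<And>x y b c. m (x+y) b c = m x b c + m y b c" using module_hom.add[OF h1] .
  have A2: "\<And>x y b c. m b (x+y) c = m b x c + m b y c" using module_hom.add[OF h2] .
  have A3: "\<And>x y b c. m b c (x+y) = m b c x + m b c y" using module_hom.add[OF h3] .
  have N1: "\<And>x b c. m (- x) b c = - m x b c" using module_hom.neg[OF h1] .
  have N2: "\<And>x b c. m b (- x) c = - m b x c" using module_hom.neg[OF h2] .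
  have N3: "\<And>x b c. m b c (- x) = - m b c x" using module_hom.neg[OF h3] .
  have M1: "\<And>x b c. m (W x) b c = W (m x b c)" unfolding W_def using module_hom.scale[OF h1] .
  have M2: "\<And>x b c. m b (W x) c = W (m b x c)" unfolding W_def using module_hom.scale[OF h2] .
  have M3: "\<And>x b c. m b c (W x) = W (m b c x)" unfolding W_def using module_hom.scale[OF h3] .
  note C = cyc[OF WA WN WW Ww Wc, of m a b c]
  have J: "tcomm_J sc m w a b c d f + tcomm_J sc m w b c d f a + tcomm_J sc m w c d f a b
      + tcomm_J sc m w d f a b c + tcomm_J sc m w f a b c d = 0"
    using as
  proof
    assume "assoc_first_kind m"
    hence mid: "\<And>a b c d f. m a (m b c d) f = m (m a b c) d f"
      and right: "\<And>a b c d f. m a b (m c d f) = m (m a b c) d f"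
      unfolding assoc_first_kind_def by metis+
    show ?thesis by (rule J_first[OF WA WN WW Ww Wc A1 A2 A3 N1 N2 N3 M1 M2 M3 mid right])
  next
    assume "assoc_second_kind m"
    hence mid: "\<And>a b c d f. m a (m b c d) f = m (m a d c) b f"
      and right: "\<And>a b c d f. m a b (m c d f) = m (m a b c) d f"
      unfolding assoc_second_kind_def by metis+
    show ?thesis by (rule J_second[OF WA WN WW Ww Wc A1 A2 A3 N1 N2 N3 M1 M2 M3 mid right])
  qed
  show "tcomm sc m w a b c = sc w (tcomm sc m w b c a)
    \<and> tcomm sc m w a b c = sc (cnj w) (tcomm sc m w c a b)
    \<and> tcomm_conj sc m w a b c = sc (cnj w) (tcomm_conj sc m w b c a)
    \<and> tcomm_conj sc m w a b c = sc w (tcomm_conj sc m w c a b)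
    \<and> tcomm_J sc m w a b c d f + tcomm_J sc m w b c d f a + tcomm_J sc m w c d f a b
      + tcomm_J sc m w d f a b c + tcomm_J sc m w f a b c d = 0"
    using C J by blast
qed

end
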